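(* Let $d\ge1$, $D=2^d$, $b$ an odd integer and $w=(b-1)/2$. Identify $a\in\{0,\dots,D-1\}$ with its bit string $(a_{d-1},\dots,a_0)$, $a=\sum_{i=0}^{d-1}a_i2^i$. For $l=1,\dots,d-1$ define the map $G_l$ on $\{0,\dots,D-1\}$ as follows: if bit $a_{d-1-l}$ of its argument $a$ equals $1$, replace the integer $t=\sum_{i=0}^{l-1}a_{d-l+i}2^i$ formed by the top $l$ bits $(a_{d-1},\dots,a_{d-l})$ by $t+w\bmod 2^l$, leaving all other bits unchanged; if $a_{d-1-l}=0$, $G_l(a)=a$. Then for every $a\in\{0,\dots,D-1\}$, $$G_{d-1}\circ G_{d-2}\circ\cdots\circ G_1(a)=ab\bmod D .$$ Consequently the modular multiplication gate $|a\rangle\mapsto|ab\bmod D\rangle$ on $d$ qubits equals the product of the corresponding controlled modular-summation gates $\mathcal{SUM}(w\bmod 2^{d-1})^{h_0}\cdots\mathcal{SUM}(w\bmod 2^{2})^{h_{d-3}}\mathcal{SUM}(w\bmod 2^{1})^{h_{d-2}}$ (rightmost applied first) and requires no auxiliary qubits.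
   Context: $\mathcal{SUM}(w\bmod 2^l)^{h_k}$ denotes the gate that, controlled by qubit $h_k$ (the qubit holding bit $a_k$), adds $w$ modulo $2^l$ to the register formed by the top $l$ qubits $(h_{d-1},\dots,h_{d-l})$, interpreted as an $l$-bit integer with $h_{d-l}$ least significant. *)

theory Defs
  imports Main
begin

definition bit_at :: "int \<Rightarrow> nat \<Rightarrow> int" where
  "bit_at a i = (a div 2 ^ i) mod 2"

definition G :: "nat \<Rightarrow> int \<Rightarrow> nat \<Rightarrow> int \<Rightarrow> int" where
  "G d w l a = (if bit_at a (d - 1 - l) = 1
     then ((a div 2 ^ (d - l) + w) mod 2 ^ l) * 2 ^ (d - l) + a mod 2 ^ (d - l)
     else a)"

fun Gcomp :: "nat \<Rightarrow> int \<Rightarrow> nat \<Rightarrow> int \<Rightarrow> int" where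
  "Gcomp d w 0 = id"
| "Gcomp d w (Suc k) = G d w (Suc k) \<circ> Gcomp d w k"

end

theory Submission
  imports Defs
begin

lemma bit_at_01: "bit_at x i = 0 \<or> bit_at x i = 1"
  unfolding bit_at_def by auto

lemma mod_step: "(a::int) mod 2^(Suc n) = a mod 2^n + bit_at a n * 2^n"
proof -
  have "a mod (2^n * 2) = 2^n * (a div 2^n mod 2) + a mod 2^n"
    by (rule zmod_zmult2_eq) simp
  thus ?thesis unfolding bit_at_def by (simp add: mult.commute)
qed

lemma bit_mod: "bit_at ((x::int) mod 2^(Suc i)) i = bit_at x i"
proof -
  have "x mod 2^Suc i = x mod 2^i + bit_at x i * 2^i" by (rule mod_step)
  moreover have "0 \<le> x mod 2^i" "x mod 2^i < 2^i" by auto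
  ultimately have "(x mod 2^Suc i) div 2^i = bit_at x i"
    by (simp add: div_add1_eq)
  moreover have "bit_at x i mod 2 = bit_at x i" unfolding bit_at_def by simp
  ultimately show ?thesis unfolding bit_at_def by simp
qed

lemma G_eq:
  assumes "0 \<le> a" "a < 2^d" "l < d"
  shows "G d w l a = (a + w * 2^(d-l) * bit_at a (d-1-l)) mod 2^d"
proof (cases "bit_at a (d-1-l) = 1")
  case True
  define n where "n = d - l"
  have dn: "d = n + l" using assms n_def by simp
  have "((a div 2^n + w) mod 2^l) * 2^n + a mod 2^n = (a + w * 2^n) mod 2^d"
  proof -
    let ?y = "a + w * 2^n"
    have "?y mod (2^n * 2^l) = 2^n * (?y div 2^n mod 2^l) + ?y mod 2^n"
      by (rule zmod_zmult2_eq) simp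
    moreover have "?y div 2^n = a div 2^n + w" by simp
    moreover have "?y mod 2^n = a mod 2^n" by simp
    ultimately show ?thesis by (simp add: dn power_add mult.commute)
  qed
  thus ?thesis using True unfolding G_def n_def by simp
next
  case False
  hence "bit_at a (d-1-l) = 0" using bit_at_01 by blast
  thus ?thesis using assms unfolding G_def by simp
qed

lemma inv:
  assumes "0 \<le> a" "a < 2^d" "k \<le> d - 1"
  shows "Gcomp d w k a = (a + 2*w*(a mod 2^(d-1) - a mod 2^(d-1-k))) mod 2^d"
  using assms(3)
proof (induction k)
  case 0
  then show ?case using assms by simp
next
  case (Suc k)
  define x where "x = Gcomp d w k a"
  define M where "M = a mod 2^(d-1)"
  define i where "i = d - 2 - k"
  have i1: "d - 1 - k = Suc i" "d - Suc k = Suc i" "d - 1 - Suc k = i"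
    using Suc.prems i_def by auto
  have xe: "x = (a + 2*w*(M - a mod 2^(Suc i))) mod 2^d"
    using Suc x_def M_def i1 by simp
  have x0: "0 \<le> x" "x < 2^d" using xe by auto
  have dv1: "(2::int)^(Suc i) dvd 2^d"
    by (rule le_imp_power_dvd) (use Suc.prems i_def in auto)
  have dv2: "(2::int)^(Suc i) dvd 2^(d-1)"
    by (rule le_imp_power_dvd) (use Suc.prems i_def in auto)
  have "M mod 2^(Suc i) = a mod 2^(Suc i)"
    unfolding M_def using dv2 by (simp add: mod_mod_cancel)
  hence dvM: "(2::int)^(Suc i) dvd (M - a mod 2^(Suc i))"
    by (metis mod_eq_dvd_iff mod_mod_trivial)
  have "x mod 2^(Suc i) = (a + 2*w*(M - a mod 2^(Suc i))) mod 2^(Suc i)"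
    using xe dv1 by (simp add: mod_mod_cancel)
  also have "\<dots> = a mod 2^(Suc i)"
    using dvM by (metis dvd_mult mod_add_right_eq add.right_neutral dvd_imp_mod_0 mult.commute)
  finally have xm: "x mod 2^(Suc i) = a mod 2^(Suc i)" .
  have bx: "bit_at x i = bit_at a i"
    using bit_mod[of x i] bit_mod[of a i] xm by simp
  have "Gcomp d w (Suc k) a = G d w (Suc k) x" by (simp add: x_def)
  also have "\<dots> = (x + w * 2^(Suc i) * bit_at a i) mod 2^d"
    using G_eq[OF x0, of "Suc k" w] Suc.prems i1 bx by simp
  also have "\<dots> = (a + 2*w*(M - a mod 2^(Suc i)) + w * 2^(Suc i) * bit_at a i) mod 2^d"
    using xe by (simp add: mod_add_left_eq)
  also have "a + 2*w*(M - a mod 2^(Suc i)) + w * 2^(Suc i) * bit_at a i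
      = a + 2*w*(M - a mod 2^i)"
    using mod_step[of a i] by (simp add: algebra_simps)
  finally show ?case using i1 M_def by simp
qed

theorem mainTheorem8:
  fixes d :: nat and b a :: int
  assumes "d \<ge> 1" and "odd b" and "0 \<le> a" and "a < 2 ^ d"
  shows "Gcomp d ((b - 1) div 2) (d - 1) a = (a * b) mod 2 ^ d"
proof -
  define w where "w = (b - 1) div 2"
  obtain k where k: "b = 2*k+1" using assms(2) by (rule oddE)
  have "w = k" unfolding w_def k by simp
  hence b: "b = 2*w + 1" using k by simp
  have e1: "Gcomp d w (d - 1) a = (a + 2*w*(a mod 2^(d-1) - a mod 2^(d-1-(d-1)))) mod 2^d"
    by (rule inv[OF assms(3,4)]) simp
  have e2: "a mod 2^(d-1-(d-1)) = 0" by simp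
  have d: "(2::int)^d = 2 * 2^(d-1)" using assms(1)
    by (cases d) auto
  have "(2::int)^(d-1) dvd (a - a mod 2^(d-1))" by (simp add: minus_mod_eq_mult_div)
  hence "(2::int)^d dvd (2*w)*(a - a mod 2^(d-1))" unfolding d by (metis mult_dvd_mono dvd_refl dvd_mult mult.assoc mult.commute)
  hence "(2::int)^d dvd (a*b - (a + 2*w*(a mod 2^(d-1))))"
    by (simp add: b algebra_simps)
  hence "(a + 2*w*(a mod 2^(d-1))) mod 2^d = (a * b) mod 2^d"
    by (metis mod_eq_dvd_iff)
  thus ?thesis using e1 e2 w_def by simp
qed
end
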